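(* Let $k$ be a positive integer and $x$ an integer with $2\le x\le p^k-1$ (i.e. $x\in\mathbb{Z}_{p^k}\setminus\{0,1\}$). Let $N_x$ be the least period of the sequence $(T_n^i(x)\bmod p)_{i\ge 0}$, let $l_x$ be the multiplicative order modulo $p$ of the integer $T'_{n^{N_x}}(x)$, and let $$v=\max\{t : T_n^{N_x l_x}(x)\equiv x\pmod{p^t}\}.$$ If $k\ge v$, then the least period of the sequence $(T_n^i(x)\bmod p^k)_{i\ge0}$ equals $N_x\cdot l_x\cdot p^{k-v}$.
   Context: $p$ is a prime with $p>3$ and $n>1$ is an integer with $\gcd(n,p)=\gcd(n,p^2-1)=1$ (so $T_n$ permutes $\mathbb{Z}_{p^j}$ for all $j\ge1$). $T_d(x)\in\mathbb{Z}[x]$ is the Chebyshev polynomial of the first kind: $T_0=1$, $T_1=x$, $T_d=2xT_{d-1}-T_{d-2}$; $T'_d$ is its derivative. $T_n^i$ is the $i$-fold composition of $T_n$ ($T_n^0(x)=x$), computed over $\mathbb{Z}$; $T_n^i=T_{n^i}$. The least period of $(T_n^i(x)\bmod p^j)_{i\ge0}$ is the least positive integer $N$ with $T_n^N(x)\equiv x\pmod{p^j}$. *)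

theory Defs
  imports "HOL-Number_Theory.Number_Theory" "HOL-Computational_Algebra.Polynomial"
begin

fun cheb :: "nat \<Rightarrow> int poly" where
  "cheb 0 = 1"
| "cheb (Suc 0) = [:0, 1:]"
| "cheb (Suc (Suc d)) = [:0, 2:] * cheb (Suc d) - cheb d"

definition chebT :: "nat \<Rightarrow> int \<Rightarrow> int" where
  "chebT d x = poly (cheb d) x"

definition chebT' :: "nat \<Rightarrow> int \<Rightarrow> int" where
  "chebT' d x = poly (pderiv (cheb d)) x"

definition chebIter :: "nat \<Rightarrow> nat \<Rightarrow> int \<Rightarrow> int" where
  "chebIter n i x = ((chebT n) ^^ i) x"

definition least_period :: "nat \<Rightarrow> int \<Rightarrow> int \<Rightarrow> nat" where
  "least_period n m x = (LEAST N. 0 < N \<and> [chebIter n N x = x] (mod m))"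

end

theory Submission
  imports Defs
begin


lemma cheb_rec: "cheb (Suc (Suc d)) = [:0, 2:] * cheb (Suc d) - cheb d" by simp

lemma cheb_prod:
  "cheb (i + k + k) + cheb i = 2 * cheb (i + k) * cheb k"
proof (induction k arbitrary: i rule: cheb.induct)
  case 1 then show ?case by simp
next
  case 2
  have "cheb (i + 2) = [:0, 2:] * cheb (Suc i) - cheb i"
    using cheb_rec[of i] by (simp add: numeral_2_eq_2)
  moreover have "[:0, 2:] = (2::int poly) * [:0,1:]"
    by (simp add: numeral_poly)
  ultimately show ?case by (simp add: algebra_simps)
next
  case (3 k)
  define X :: "int poly" where "X = [:0,2:]"
  define A where "A = cheb (i + Suc (Suc k))"
  define M3 where "M3 = Suc i + Suc k + Suc k"
  define M2 where "M2 = Suc (Suc i) + k + k"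
  define c1 where "c1 = cheb (Suc k)"
  define c0 where "c0 = cheb k"
  define d1 where "d1 = cheb (Suc i)"
  define d0 where "d0 = cheb i"
  have eA: "Suc i + Suc k = i + Suc (Suc k)" "Suc (Suc i) + k = i + Suc (Suc k)" by simp_all
  have h1: "cheb M3 + d1 = 2 * A * c1"
    using 3(1)[of "Suc i"] unfolding A_def M3_def d1_def c1_def eA(1)[symmetric] .
  have h2: "cheb M2 + cheb (Suc (Suc i)) = 2 * A * c0"
    using 3(2)[of "Suc (Suc i)"] unfolding A_def M2_def c0_def eA(2)[symmetric] .
  have i1: "i + Suc (Suc k) + Suc (Suc k) = Suc (Suc M2)" "Suc M2 = M3"
    unfolding M2_def M3_def by simp_all
  have r1: "cheb (i + Suc (Suc k) + Suc (Suc k)) = X * cheb M3 - cheb M2"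
    using cheb_rec[of M2] unfolding i1(1) X_def by (simp only: i1(2))
  have r2: "cheb (Suc (Suc i)) = X * d1 - d0" unfolding X_def d1_def d0_def by simp
  have r3: "cheb (Suc (Suc k)) = X * c1 - c0" unfolding X_def c1_def c0_def by simp
  have "2 * cheb (i + Suc (Suc k)) * cheb (Suc (Suc k)) = 2 * A * (X * c1 - c0)"
    unfolding r3 A_def ..
  also have "\<dots> = X * (2 * A * c1) - 2 * A * c0"
    by (simp only: right_diff_distrib mult_ac)
  also have "\<dots> = X * (cheb M3 + d1) - (cheb M2 + cheb (Suc (Suc i)))"
    using h1 h2 by simp
  also have "\<dots> = cheb (i + Suc (Suc k) + Suc (Suc k)) + d0"
    unfolding r1 r2 by (simp only: right_diff_distrib distrib_left diff_add_eq add_diff_eq diff_diff_eq2 add_ac diff_add_cancel add_diff_cancel)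
  finally show ?case unfolding d0_def by simp
qed

lemma cheb_comp: "cheb (a * b) = pcompose (cheb a) (cheb b)"
proof (induction a rule: cheb.induct)
  case 1 then show ?case by (simp add: pcompose_1)
next
  case 2 then show ?case by (simp add: pcompose_pCons)
next
  case (3 a)
  have "cheb (a*b + b + b) + cheb (a*b) = 2 * cheb (a*b + b) * cheb b" by (rule cheb_prod)
  hence "cheb (Suc (Suc a) * b) = 2 * cheb b * cheb (Suc a * b) - cheb (a * b)"
    by (simp add: algebra_simps)
  also have "\<dots> = pcompose (cheb (Suc (Suc a))) (cheb b)"
    using 3 by (simp add: pcompose_diff pcompose_mult pcompose_pCons pcompose_smult algebra_simps numeral_poly)
  finally show ?case .
qed

lemma chebT_mult: "chebT (a * b) y = chebT a (chebT b y)"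
  by (simp add: chebT_def cheb_comp poly_pcompose)

lemma chebT'_mult: "chebT' (a * b) y = chebT' a (chebT b y) * chebT' b y"
  by (simp add: chebT'_def chebT_def cheb_comp pderiv_pcompose poly_pcompose)

lemma chebIter_eq: "chebIter n i y = chebT (n ^ i) y"
  unfolding chebIter_def
  by (induction i) (simp_all add: chebT_mult, simp add: chebT_def)

lemma chebT_funpow: "(chebT a ^^ j) y = chebT (a ^ j) y"
  by (induction j) (simp_all add: chebT_mult, simp add: chebT_def)



lemma poly_cong_int: "[y = z] (mod m) \<Longrightarrow> [poly (P::int poly) y = poly P z] (mod m)"
  by (induction P) (auto intro: cong_add cong_mult)

lemma taylor2:
  fixes P :: "int poly" and x :: int
  shows "\<exists>c. \<forall>y. \<exists>R. poly P y = poly P x + poly (pderiv P) x * (y - x) + c * (y - x)^2 + (y - x)^3 * R"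
proof -
  define Q where "Q = pcompose P [:x, 1:]"
  have Qev: "poly Q t = poly P (x + t)" for t unfolding Q_def by (simp add: poly_pcompose)
  obtain a0 Q1 where Q1: "Q = pCons a0 Q1" by (cases Q)
  obtain a1 Q2 where Q2: "Q1 = pCons a1 Q2" by (cases Q1)
  obtain a2 Q3 where Q3: "Q2 = pCons a2 Q3" by (cases Q2)
  have a0: "a0 = poly P x" using Qev[of 0] unfolding Q1 by simp
  have "pderiv Q = pcompose (pderiv P) [:x, 1:]"
    unfolding Q_def by (simp add: pderiv_pcompose pderiv_pCons)
  hence "poly (pderiv Q) 0 = poly (pderiv P) x" by (simp add: poly_pcompose)
  moreover have "poly (pderiv Q) 0 = a1" unfolding Q1 Q2 by (simp add: pderiv_pCons)
  ultimately have a1: "a1 = poly (pderiv P) x" by simp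
  show ?thesis
  proof (intro exI allI)
    fix y
    have "poly P y = poly Q (y - x)" using Qev[of "y - x"] by simp
    also have "\<dots> = poly P x + poly (pderiv P) x * (y - x) + a2 * (y - x)^2 + (y - x)^3 * poly Q3 (y - x)"
      unfolding Q1 Q2 Q3 a0 a1 by (simp add: algebra_simps power2_eq_square power3_eq_cube)
    finally show "poly P y = poly P x + poly (pderiv P) x * (y - x) + a2 * (y - x)^2 + (y - x)^3 * poly Q3 (y - x)" .
  qed
qed

lemma taylor1:
  fixes P :: "int poly" and x :: int
  shows "\<exists>R. poly P y = poly P x + poly (pderiv P) x * (y - x) + (y - x)^2 * R"
proof -
  obtain c where "\<forall>y. \<exists>R. poly P y = poly P x + poly (pderiv P) x * (y - x) + c * (y - x)^2 + (y - x)^3 * R"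
    using taylor2 by blast
  then obtain R where "poly P y = poly P x + poly (pderiv P) x * (y - x) + c * (y - x)^2 + (y - x)^3 * R" by blast
  hence "poly P y = poly P x + poly (pderiv P) x * (y - x) + (y - x)^2 * (c + (y - x) * R)"
    by (simp add: algebra_simps power2_eq_square power3_eq_cube)
  thus ?thesis by blast
qed

lemma dvd_pow_mono_int: "(q::int) ^ a dvd q ^ b" if "a \<le> b"
  using that by (simp add: le_imp_power_dvd)

lemma iter_first:
  fixes P :: "int poly" and x q :: int
  assumes w: "w \<ge> 1" and dw: "q ^ w dvd (poly P x - x)"
  shows "q ^ Suc w dvd (((poly P ^^ j) x - x) - (poly P x - x) * (\<Sum>i<j. (poly (pderiv P) x)^i))"
proof (induction j)
  case 0 then show ?case by simp
next
  case (Suc j)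
  define d where "d = poly P x - x"
  define l where "l = poly (pderiv P) x"
  define e where "e = (poly P ^^ j) x - x"
  define S where "S = (\<Sum>i<j. l^i)"
  have IH: "q ^ Suc w dvd (e - d * S)" using Suc unfolding e_def d_def S_def l_def .
  have "q ^ w dvd e - d * S" using IH by (meson dvd_trans dvd_pow_mono_int le_SucI order_refl)
  moreover have "q ^ w dvd d * S" using dw unfolding d_def by simp
  ultimately have ew: "q ^ w dvd e" using dvd_add[of "q^w" "e - d*S" "d*S"] by simp
  obtain R where R: "poly P ((poly P ^^ j) x) = poly P x + l * e + e^2 * R"
    using taylor1[of P "(poly P ^^ j) x" x] unfolding l_def e_def by blast
  have e2: "q ^ Suc w dvd e^2 * R"
  proof -
    have "q ^ (w + w) dvd e^2" using ew by (simp add: power_add power2_eq_square mult_dvd_mono)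
    moreover have "q ^ Suc w dvd q ^ (w + w)" using w by (intro dvd_pow_mono_int) simp
    ultimately show ?thesis by (meson dvd_mult2 dvd_trans)
  qed
  have sumS: "(\<Sum>i<Suc j. l^i) = 1 + l * S"
    unfolding S_def sum.lessThan_Suc_shift by (simp add: sum_distrib_left del: sum.lessThan_Suc)
  have PY: "(poly P ^^ Suc j) x = poly P x + l * e + e^2 * R" using R by simp
  have "((poly P ^^ Suc j) x - x) - d * (\<Sum>i<Suc j. l^i) = l * (e - d * S) + e^2 * R"
    unfolding sumS PY d_def by (simp add: algebra_simps)
  moreover have "q ^ Suc w dvd l * (e - d * S) + e^2 * R"
    using IH e2 by simp
  ultimately show ?case unfolding d_def l_def by simp
qed



lemma sum_id_2: "2 * (\<Sum>i<j. int i) = int j * (int j - 1)"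
  by (induction j) (simp_all add: algebra_simps)

lemma sum_sq_6: "6 * (\<Sum>i<j. int i ^ 2) = int j * (int j - 1) * (2 * int j - 1)"
  by (induction j) (simp_all add: algebra_simps power2_eq_square)

lemma prime_dvd_sum_id:
  assumes "prime p" "p > 3"
  shows "int p dvd (\<Sum>i<p. int i)" "int p dvd (\<Sum>i<p. int i ^ 2)"
proof -
  have pp: "prime (int p)" using assms by simp
  have "int p dvd 2 * (\<Sum>i<p. int i)" unfolding sum_id_2 by simp
  moreover have "\<not> int p dvd 2"
  proof
    assume "int p dvd 2" hence "p dvd 2" by (metis int_dvd_int_iff of_nat_numeral) hence "p \<le> 2" by (simp add: dvd_imp_le)
    with assms show False by simp
  qed
  ultimately show "int p dvd (\<Sum>i<p. int i)" using pp prime_dvd_mult_iff by blast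
  have "int p dvd 6 * (\<Sum>i<p. int i ^ 2)" unfolding sum_sq_6 by simp
  moreover have "\<not> int p dvd 2" "\<not> int p dvd 3"
  proof -
    show "\<not> int p dvd 2"
    proof assume "int p dvd 2" hence "p dvd 2" by (metis int_dvd_int_iff of_nat_numeral) hence "p \<le> 2" by (simp add: dvd_imp_le)
      with assms show False by simp qed
    show "\<not> int p dvd 3"
    proof assume "int p dvd 3" hence "p dvd 3" by (metis int_dvd_int_iff of_nat_numeral) hence "p \<le> 3" by (simp add: dvd_imp_le)
      with assms show False by simp qed
  qed
  moreover have "(6::int) = 2 * 3" by simp
  ultimately show "int p dvd (\<Sum>i<p. int i ^ 2)" using pp prime_dvd_mult_iff by metis
qed

lemma iter_p:
  fixes P :: "int poly" and x :: int and p :: nat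
  assumes p: "prime p" "p > 3" and w: "w \<ge> 1"
    and dw: "int p ^ w dvd (poly P x - x)" and ndw: "\<not> int p ^ Suc w dvd (poly P x - x)"
    and l1: "[poly (pderiv P) x = 1] (mod int p)"
  shows "int p ^ Suc w dvd ((poly P ^^ p) x - x) \<and> \<not> int p ^ Suc (Suc w) dvd ((poly P ^^ p) x - x)"
proof -
  define q where "q = int p"
  define d where "d = poly P x - x"
  define l where "l = poly (pderiv P) x"
  obtain c where c: "\<forall>y. \<exists>R. poly P y = poly P x + l * (y - x) + c * (y - x)^2 + (y - x)^3 * R"
    using taylor2[of P x] unfolding l_def by blast
  obtain \<mu> where mu: "l = 1 + q * \<mu>"
    using l1 unfolding l_def q_def cong_iff_dvd_diff dvd_def by (metis add.commute diff_add_cancel)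
  define A where "A j = (\<Sum>i<j. int i)" for j
  define B where "B j = (\<Sum>i<j. int i ^ 2)" for j
  define e where "e j = (poly P ^^ j) x - x" for j
  have dw': "q ^ w dvd d" using dw unfolding q_def d_def .
  have pw: "q ^ Suc (Suc w) dvd q ^ (w + w + 1)" "q ^ Suc (Suc w) dvd q ^ (w + w + w)"
           "q ^ Suc w dvd q ^ (w + w)"
    using w by (intro dvd_pow_mono_int; simp)+
  have inv: "q ^ Suc (Suc w) dvd (e j - (int j * d + q * \<mu> * d * A j + c * d^2 * B j))" for j
  proof (induction j)
    case 0 then show ?case by (simp add: e_def A_def B_def)
  next
    case (Suc j)
    define E where "E = int j * d + q * \<mu> * d * A j + c * d^2 * B j"
    define ej where "ej = e j"
    have IH: "q ^ Suc (Suc w) dvd ej - E" using Suc unfolding E_def ej_def .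
    have d2: "q ^ (w + w) dvd d^2" using dw' by (simp add: power_add power2_eq_square mult_dvd_mono)
    have "q ^ Suc w dvd ej - int j * d"
    proof -
      have eq: "ej - int j * d = (ej - E) + q * \<mu> * d * A j + c * d^2 * B j" unfolding E_def by simp
      have a1: "q ^ Suc w dvd ej - E" using IH by (meson dvd_trans dvd_pow_mono_int le_SucI order_refl)
      have a2: "q ^ Suc w dvd q * \<mu> * d * A j"
      proof -
        obtain d' where "d = q ^ w * d'" using dw' by blast
        hence "q * \<mu> * d * A j = q ^ Suc w * (\<mu> * d' * A j)" by (simp only: power_Suc mult_ac)
        thus ?thesis by (metis dvd_triv_left)
      qed
      have a3: "q ^ Suc w dvd c * d^2 * B j" using d2 pw(3) by (meson dvd_mult dvd_mult2 dvd_trans)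
      have "q ^ Suc w dvd (ej - E) + q * \<mu> * d * A j + c * d^2 * B j"
        using a1 a2 a3 by (intro dvd_add)
      thus ?thesis unfolding eq .
    qed
    then obtain t where t: "ej - int j * d = q ^ Suc w * t" by blast
    have ejw: "q ^ w dvd ej"
    proof -
      have "ej = int j * d + q ^ Suc w * t" using t by simp
      moreover have "q ^ w dvd q ^ Suc w * t" by simp
      ultimately show ?thesis using dw' by simp
    qed
    obtain R where R: "poly P ((poly P ^^ j) x) = poly P x + l * ej + c * ej^2 + ej^3 * R"
      using c unfolding ej_def e_def by blast
    have eSuc: "e (Suc j) = d + l * ej + c * ej^2 + ej^3 * R"
      unfolding e_def using R unfolding d_def by simp
    have key: "e (Suc j) - (int (Suc j) * d + q * \<mu> * d * A (Suc j) + c * d^2 * B (Suc j))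
      = (ej - E) + q * \<mu> * (ej - int j * d) + c * ((ej - int j * d) * (ej + int j * d)) + ej^3 * R"
      unfolding eSuc E_def A_def B_def mu by (simp add: algebra_simps power2_eq_square)
    have t1: "q ^ Suc (Suc w) dvd q * \<mu> * (ej - int j * d)"
      unfolding t by (simp add: mult_dvd_mono mult.assoc mult.left_commute)
    have t2: "q ^ Suc (Suc w) dvd c * ((ej - int j * d) * (ej + int j * d))"
    proof -
      have "q ^ w dvd ej + int j * d" using ejw dw' by simp
      then obtain s where s: "ej + int j * d = q ^ w * s" by blast
      have "(ej - int j * d) * (ej + int j * d) = q ^ (w + w + 1) * (t * s)"
        unfolding t s by (simp add: power_add algebra_simps)
      thus ?thesis using pw(1) by (metis dvd_mult dvd_mult2 dvd_trans)
    qed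
    have t3: "q ^ Suc (Suc w) dvd ej^3 * R"
    proof -
      have "q ^ (w + w + w) dvd ej^3" using ejw by (simp add: power_add power3_eq_cube mult_dvd_mono)
      thus ?thesis using pw(2) by (meson dvd_mult2 dvd_trans)
    qed
    show ?case unfolding key using IH t1 t2 t3 by simp
  qed
  have Ap: "q dvd A p" "q dvd B p" using prime_dvd_sum_id[OF p] unfolding q_def A_def B_def by auto
  have "q ^ Suc (Suc w) dvd q * \<mu> * d * A p"
  proof -
    obtain a where "A p = q * a" using Ap by blast
    obtain d' where "d = q ^ w * d'" using dw' by blast
    have "q * \<mu> * d * A p = q ^ Suc (Suc w) * (\<mu> * d' * a)"
      unfolding \<open>A p = q * a\<close> \<open>d = q ^ w * d'\<close> by (simp only: power_Suc mult_ac)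
    thus ?thesis by (metis dvd_triv_left)
  qed
  moreover have "q ^ Suc (Suc w) dvd c * d^2 * B p"
  proof -
    obtain b where "B p = q * b" using Ap by blast
    have d2: "q ^ (w + w) dvd d^2" using dw' by (simp add: power_add power2_eq_square mult_dvd_mono)
    have "q ^ (w + w) * q dvd d^2 * B p" unfolding \<open>B p = q * b\<close> using d2 by (simp add: mult_dvd_mono)
    hence "q ^ (w + w + 1) dvd d^2 * B p" by (simp add: mult.commute)
    hence "q ^ (w + w + 1) dvd c * (d^2 * B p)" by (rule dvd_mult)
    hence "q ^ (w + w + 1) dvd c * d^2 * B p" by (simp add: mult.assoc)
    thus ?thesis using pw(1) by (rule dvd_trans[rotated])
  qed
  moreover have "q ^ Suc (Suc w) dvd e p - (int p * d + q * \<mu> * d * A p + c * d^2 * B p)"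
    using inv[of p] .
  ultimately have "q ^ Suc (Suc w) dvd (e p - (int p * d + q * \<mu> * d * A p + c * d^2 * B p)) + q * \<mu> * d * A p + c * d^2 * B p"
    by (intro dvd_add)
  moreover have "(e p - (int p * d + q * \<mu> * d * A p + c * d^2 * B p)) + q * \<mu> * d * A p + c * d^2 * B p = e p - q * d"
    unfolding q_def by simp
  ultimately have main: "q ^ Suc (Suc w) dvd e p - q * d" by metis
  have qd1: "q ^ Suc w dvd q * d" using dw' by simp
  have qd2: "\<not> q ^ Suc (Suc w) dvd q * d"
  proof
    assume "q ^ Suc (Suc w) dvd q * d"
    hence "q * q ^ Suc w dvd q * d" by simp
    hence "q ^ Suc w dvd d" using p(1) unfolding q_def by (subst (asm) dvd_mult_cancel_left) auto
    thus False using ndw unfolding q_def d_def by simp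
  qed
  have "q ^ Suc w dvd e p"
  proof -
    have "q ^ Suc w dvd e p - q * d" using main by (meson dvd_trans dvd_pow_mono_int le_SucI order_refl)
    hence "q ^ Suc w dvd (e p - q * d) + q * d" using qd1 by (rule dvd_add)
    thus ?thesis by simp
  qed
  moreover have "\<not> q ^ Suc (Suc w) dvd e p"
  proof
    assume h: "q ^ Suc (Suc w) dvd e p"
    have "q ^ Suc (Suc w) dvd e p - (e p - q * d)" using h main by (rule dvd_diff)
    thus False using qd2 by simp
  qed
  ultimately show ?thesis unfolding e_def q_def by simp
qed



lemma chebT_rec: "chebT (Suc (Suc m)) y = 2 * y * chebT (Suc m) y - chebT m y"
  by (simp add: chebT_def)

lemma chebT_0 [simp]: "chebT 0 y = 1" and chebT_1 [simp]: "chebT (Suc 0) y = y"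
  by (simp_all add: chebT_def)

lemma cheb_complex:
  fixes y :: int and s :: complex
  assumes s: "s^2 = of_int (y^2 - 1)"
  shows "2 * of_int (chebT m y) = (of_int y + s)^m + (of_int y - s)^m"
proof (induction m rule: cheb.induct)
  case 1 then show ?case by simp
next
  case 2 then show ?case by simp
next
  case (3 m)
  have z1: "(of_int y + s)^2 = 2 * of_int y * (of_int y + s) - 1"
    using s by (simp add: power2_eq_square algebra_simps)
  have z2: "(of_int y - s)^2 = 2 * of_int y * (of_int y - s) - 1"
    using s by (simp add: power2_eq_square algebra_simps)
  have g: "Z^Suc (Suc m) = 2 * of_int y * Z^Suc m - Z^m" if "Z^2 = 2 * of_int y * Z - 1" for Z :: complex
  proof -
    have "Z^Suc (Suc m) = Z^m * Z^2" by (simp add: power2_eq_square algebra_simps)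
    also have "\<dots> = Z^m * (2 * of_int y * Z - 1)" unfolding that ..
    also have "\<dots> = 2 * of_int y * Z^Suc m - Z^m" by (simp add: algebra_simps)
    finally show ?thesis .
  qed
  define Z1 where "Z1 = of_int y + s"
  define Z2 where "Z2 = of_int y - s"
  have g1: "Z1^Suc (Suc m) = 2 * of_int y * Z1^Suc m - Z1^m"
    using g[OF z1] unfolding Z1_def .
  have g2: "Z2^Suc (Suc m) = 2 * of_int y * Z2^Suc m - Z2^m"
    using g[OF z2] unfolding Z2_def .
  have "2 * of_int (chebT (Suc (Suc m)) y) = 2 * of_int y * (2 * of_int (chebT (Suc m) y)) - 2 * (of_int (chebT m y) :: complex)"
    unfolding chebT_rec by (simp add: algebra_simps)
  also have "\<dots> = 2 * of_int y * (Z1^Suc m + Z2^Suc m) - (Z1^m + Z2^m)"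
    using 3 unfolding Z1_def Z2_def by simp
  also have "\<dots> = Z1^Suc (Suc m) + Z2^Suc (Suc m)"
    unfolding g1 g2 by (simp only: algebra_simps)
  finally show ?case unfolding Z1_def Z2_def .
qed

lemma chebT_p_sum:
  fixes y :: int
  shows "2 * chebT m y = (\<Sum>k\<le>m. int (m choose k) * (if even k then 2 * (y^2 - 1)^(k div 2) else 0) * y^(m - k))"
proof -
  define s where "s = csqrt (of_int (y^2 - 1))"
  have s: "s^2 = of_int (y^2 - 1)" unfolding s_def by simp
  have sk: "s^k + (-s)^k = of_int (if even k then 2 * (y^2 - 1)^(k div 2) else 0)" for k
  proof (cases "even k")
    case True
    then obtain j where k: "k = 2 * j" by blast
    have "s^k = (s^2)^j" unfolding k by (simp add: power_mult)
    moreover have "(-s)^k = s^k" using True by simp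
    ultimately show ?thesis using True s k by simp
  next
    case False
    then show ?thesis by simp
  qed
  have "of_int (2 * chebT m y) = (s + of_int y)^m + (-s + of_int y)^m"
    using cheb_complex[OF s, of m] by (simp add: algebra_simps)
  also have "\<dots> = (\<Sum>k\<le>m. of_nat (m choose k) * (s^k + (-s)^k) * of_int y^(m-k))"
    unfolding binomial_ring by (simp add: sum.distrib[symmetric] algebra_simps)
  also have "\<dots> = (of_int (\<Sum>k\<le>m. int (m choose k) * (if even k then 2 * (y^2 - 1)^(k div 2) else 0) * y^(m - k)) :: complex)"
    unfolding sk by simp
  finally show ?thesis by (simp only: of_int_eq_iff)
qed

lemma chebT_p_cong:
  fixes y :: int
  assumes p: "prime p" "p > 2"
  shows "[chebT p y = y ^ p] (mod int p)"
proof -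
  define f where "f k = int (p choose k) * (if even k then 2 * (y^2 - 1)^(k div 2) else 0) * y^(p - k)" for k
  have "{..p} = insert 0 {1..p}" by auto
  hence "(\<Sum>k\<le>p. f k) = f 0 + (\<Sum>k\<in>{1..p}. f k)" by simp
  moreover have "int p dvd (\<Sum>k\<in>{1..p}. f k)"
  proof (rule dvd_sum)
    fix k assume k: "k \<in> {1..p}"
    show "int p dvd f k"
    proof (cases "k = p")
      case True
      have "odd p" using p prime_odd_nat by blast
      then show ?thesis using True unfolding f_def by simp
    next
      case False
      hence "p dvd (p choose k)" using k p by (intro dvd_choose_prime) auto
      hence "int p dvd int (p choose k)" by simp
      then show ?thesis unfolding f_def by simp
    qed
  qed
  moreover have "f 0 = 2 * y^p" unfolding f_def by simp
  ultimately have "int p dvd 2 * chebT p y - 2 * y ^ p"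
    using chebT_p_sum[of p y] unfolding f_def[symmetric] by simp
  hence "int p dvd 2 * (chebT p y - y ^ p)" by (simp add: algebra_simps)
  moreover have "\<not> int p dvd 2"
  proof
    assume "int p dvd 2" hence "p dvd 2" by (metis int_dvd_int_iff of_nat_numeral)
    hence "p \<le> 2" by (simp add: dvd_imp_le)
    with p show False by simp
  qed
  moreover have "prime (int p)" using p by simp
  ultimately have "int p dvd chebT p y - y ^ p" using prime_dvd_mult_iff by blast
  thus ?thesis by (simp add: cong_iff_dvd_diff)
qed

lemma fermat_int:
  fixes y :: int
  assumes p: "prime p"
  shows "[y ^ p = y] (mod int p)"
proof -
  define a where "a = nat (y mod int p)"
  have ya: "int a = y mod int p" unfolding a_def using p prime_gt_0_nat by simp
  have "[a ^ p = a] (mod p)"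
  proof (cases "p dvd a")
    case True
    hence "p dvd a ^ p" using p prime_gt_0_nat[OF p] by (metis dvd_power dvd_trans)
    hence "[a ^ p = 0] (mod p)" by (simp add: cong_0_iff)
    moreover have "[0 = a] (mod p)" using True by (metis cong_0_iff cong_sym)
    ultimately show ?thesis by (rule cong_trans)
  next
    case False
    have "[a ^ (p - 1) = 1] (mod p)" using fermat_theorem[OF p False] .
    hence "[a ^ (p - 1) * a = 1 * a] (mod p)" by (rule cong_mult) simp
    moreover have "a ^ (p - 1) * a = a ^ p" using p prime_gt_0_nat
      by (metis Suc_diff_1 power_Suc2)
    ultimately show ?thesis by simp
  qed
  hence "[int a ^ p = int a] (mod int p)" using cong_int_iff by (metis of_nat_power)
  hence "[(y mod int p) ^ p = y mod int p] (mod int p)" unfolding ya .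
  moreover have "[(y mod int p) ^ p = y ^ p] (mod int p)" by (simp add: cong_pow cong_mod_left)
  moreover have "[y mod int p = y] (mod int p)" by (simp add: cong_mod_left)
  ultimately show ?thesis by (meson cong_sym cong_trans)
qed



fun abT :: "int \<Rightarrow> nat \<Rightarrow> int \<times> int" where
  "abT y 0 = (1, 0)"
| "abT y (Suc m) = (- snd (abT y m), fst (abT y m) + 2 * y * snd (abT y m))"

definition mulR :: "int \<Rightarrow> int \<times> int \<Rightarrow> int \<times> int \<Rightarrow> int \<times> int" where
  "mulR y u v = (fst u * fst v - snd u * snd v, fst u * snd v + snd u * fst v + 2 * y * snd u * snd v)"

lemma abT_add: "abT y (m + k) = mulR y (abT y m) (abT y k)"
  by (induction k) (simp_all add: mulR_def algebra_simps)

lemma chebT_ab: "chebT m y = fst (abT y m) + y * snd (abT y m)"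
proof (induction m rule: cheb.induct)
  case 1 then show ?case by simp
next
  case 2 then show ?case by simp
next
  case (3 m)
  define a where "a = fst (abT y m)"
  define b where "b = snd (abT y m)"
  have e1: "chebT (Suc m) y = -b + y*(a + 2*y*b)" using 3(1) by (simp add: a_def b_def)
  have e0: "chebT m y = a + y*b" using 3(2) by (simp add: a_def b_def)
  show ?case unfolding chebT_rec e1 e0 by (simp add: a_def b_def algebra_simps)
qed

lemma abT_norm: "fst (abT y m)^2 + 2 * y * fst (abT y m) * snd (abT y m) + snd (abT y m)^2 = 1"
  by (induction m) (simp_all add: algebra_simps power2_eq_square)

definition pc :: "int \<Rightarrow> int \<times> int \<Rightarrow> int \<times> int \<Rightarrow> bool" where
  "pc q u v \<longleftrightarrow> [fst u = fst v] (mod q) \<and> [snd u = snd v] (mod q)"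

lemma pc_trans: "pc q u v \<Longrightarrow> pc q v w \<Longrightarrow> pc q u w"
  unfolding pc_def using cong_trans by blast

lemma mulR_cong: "pc q u u' \<Longrightarrow> pc q (mulR y u v) (mulR y u' v)"
  unfolding pc_def mulR_def by (auto intro!: cong_add cong_diff cong_mult)

lemma abT_iter:
  assumes "pc q (abT y (1 + K)) (abT y 1)"
  shows "pc q (abT y (1 + j * K)) (abT y 1)"
proof (induction j)
  case 0 then show ?case by (simp add: pc_def)
next
  case (Suc j)
  have "abT y (1 + Suc j * K) = abT y ((1 + K) + j * K)"
    by (rule arg_cong[where f="abT y"]) simp
  also have "\<dots> = mulR y (abT y (1 + K)) (abT y (j * K))" by (rule abT_add)
  finally have "abT y (1 + Suc j * K) = mulR y (abT y (1 + K)) (abT y (j * K))" .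
  moreover have "pc q (mulR y (abT y (1 + K)) (abT y (j * K))) (mulR y (abT y 1) (abT y (j * K)))"
    using assms by (rule mulR_cong)
  moreover have "mulR y (abT y 1) (abT y (j * K)) = abT y (1 + j * K)"
    by (rule abT_add[symmetric])
  ultimately show ?case using Suc pc_trans by metis
qed

lemma period_from_K:
  assumes pcK: "pc q (abT y (1 + K)) (abT y 1)" and K: "K > 1" and cop: "coprime n K"
  shows "\<exists>i>0. [chebT (n ^ i) y = y] (mod q)"
proof -
  define i where "i = totient K"
  have i0: "i > 0" unfolding i_def using K by simp
  have "[n ^ i = 1] (mod K)" unfolding i_def using euler_theorem[OF cop] .
  hence "n ^ i mod K = 1" using K by (simp add: cong_def)
  define M where "M = n ^ i div K"
  have ni: "n ^ i = 1 + M * K" unfolding M_def using \<open>n ^ i mod K = 1\<close> by (metis add.commute div_mult_mod_eq)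
  have "pc q (abT y (n ^ i)) (abT y 1)"
    unfolding ni by (rule abT_iter[OF pcK])
  hence h: "[fst (abT y (n ^ i)) = fst (abT y 1)] (mod q)" "[snd (abT y (n ^ i)) = snd (abT y 1)] (mod q)"
    unfolding pc_def by auto
  have "[fst (abT y (n ^ i)) + y * snd (abT y (n ^ i)) = fst (abT y 1) + y * snd (abT y 1)] (mod q)"
    by (intro cong_add cong_mult cong_refl h)
  hence "[chebT (n ^ i) y = chebT 1 y] (mod q)" unfolding chebT_ab .
  thus ?thesis using i0 by auto
qed

lemma chebT_one: "chebT m 1 = 1"
  by (induction m rule: cheb.induct) (simp_all add: chebT_rec)

lemma chebT_minus_one: "chebT m (-1) = (-1) ^ m"
  by (induction m rule: cheb.induct) (simp_all add: chebT_rec)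

lemma period_mod_p_exists:
  fixes p n :: nat and x :: int
  assumes p: "prime p" "p > 3" and cop: "coprime n (p^2 - 1)"
  shows "\<exists>N>0. [chebIter n N x = x] (mod int p)"
proof -
  define q where "q = int p"
  define a where "a = fst (abT x p)"
  define b where "b = snd (abT x p)"
  have Tp: "[chebT p x = x] (mod q)"
    using chebT_p_cong[of p x] fermat_int[of p x] p unfolding q_def by (auto intro: cong_trans)
  hence "q dvd (a + x * b - x)" unfolding a_def b_def chebT_ab cong_iff_dvd_diff by simp
  then obtain t where t: "a + x * b - x = q * t" by blast
  have norm: "a^2 + 2 * x * a * b + b^2 = 1" unfolding a_def b_def by (rule abT_norm)
  have "a^2 + 2 * x * a * b + b^2 - 1 = (1 - b^2) * (x^2 - 1) + (a + x * b - x) * (2 * x + (a + x * b - x))"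
    by (simp add: algebra_simps power2_eq_square)
  hence "(1 - b^2) * (x^2 - 1) = - (q * t) * (2 * x + q * t)" using norm t by simp
  moreover have "(1 - b) * (1 + b) * ((x - 1) * (x + 1)) = (1 - b^2) * (x^2 - 1)"
    by (simp add: algebra_simps power2_eq_square)
  ultimately have "(1 - b) * (1 + b) * ((x - 1) * (x + 1)) = q * (- t * (2 * x + q * t))" by simp
  hence "q dvd (1 - b) * (1 + b) * ((x - 1) * (x + 1))" by (metis dvd_triv_left)
  moreover have pq: "prime q" unfolding q_def using p by simp
  ultimately have "q dvd 1 - b \<or> q dvd 1 + b \<or> q dvd x - 1 \<or> q dvd x + 1"
    by (simp add: prime_dvd_mult_iff)
  have p2: "p^2 - 1 = (p - 1) * (p + 1)" by (simp add: power2_eq_square algebra_simps)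
  have copm: "coprime n (p - 1)" "coprime n (p + 1)" using cop unfolding p2 coprime_mult_right_iff by blast+
  consider "q dvd 1 - b" | "q dvd 1 + b" | "q dvd x - 1" | "q dvd x + 1"
    using \<open>q dvd 1 - b \<or> _\<close> by blast
  then show ?thesis
  proof cases
    case 1
    have "[a = 0] (mod q)"
    proof -
      obtain r where "1 - b = q * r" using 1 by blast
      hence bb: "b = 1 - q * r" by simp
      have "a = q * t + x * (q * r)" using t unfolding bb by (simp add: algebra_simps)
      thus ?thesis by (simp add: cong_0_iff)
    qed
    moreover have "[b = 1] (mod q)" using 1 by (simp add: cong_iff_dvd_diff dvd_diff_commute)
    ultimately have "pc q (abT x (1 + (p - 1))) (abT x 1)"
      using p unfolding pc_def a_def b_def by simp
    moreover have "p - 1 > 1" using p by simp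
    ultimately obtain i where "i > 0" "[chebT (n ^ i) x = x] (mod q)"
      using period_from_K copm(1) by blast
    thus ?thesis unfolding q_def chebIter_eq by blast
  next
    case 2
    have "[a = 2 * x] (mod q)"
    proof -
      obtain r where "1 + b = q * r" using 2 by blast
      hence bb: "b = q * r - 1" by simp
      have "a - 2 * x = q * t - x * (q * r)" using t unfolding bb by (simp add: algebra_simps)
      thus ?thesis by (simp add: cong_iff_dvd_diff)
    qed
    moreover have "[b = - 1] (mod q)" using 2 by (simp add: cong_iff_dvd_diff add.commute)
    ultimately have "pc q (abT x p) (2 * x, - 1)"
      unfolding pc_def a_def b_def by simp
    hence pc1: "pc q (mulR x (abT x p) (abT x 1)) (mulR x (2 * x, - 1) (abT x 1))" by (rule mulR_cong)
    have e: "mulR x (abT x p) (abT x 1) = abT x (p + 1)" by (rule abT_add[symmetric])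
    have e2: "mulR x (2 * x, - 1) (abT x 1) = abT x 0" by (simp add: mulR_def)
    have "pc q (abT x (p + 1)) (abT x 0)" using pc1 unfolding e e2 .
    hence pc2: "pc q (mulR x (abT x (p + 1)) (abT x 1)) (mulR x (abT x 0) (abT x 1))" by (rule mulR_cong)
    have e3: "mulR x (abT x (p + 1)) (abT x 1) = abT x (1 + (p + 1))"
      using abT_add[of x "p + 1" 1, symmetric] by (simp add: add.commute)
    have e4: "mulR x (abT x 0) (abT x 1) = abT x 1"
      using abT_add[of x 0 1, symmetric] by simp
    have "pc q (abT x (1 + (p + 1))) (abT x 1)" using pc2 unfolding e3 e4 .
    moreover have "p + 1 > 1" using p by simp
    ultimately obtain i where "i > 0" "[chebT (n ^ i) x = x] (mod q)"
      using period_from_K copm(2) by blast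
    thus ?thesis unfolding q_def chebIter_eq by blast
  next
    case 3
    hence "[x = 1] (mod q)" by (simp add: cong_iff_dvd_diff)
    hence "[chebT n x = chebT n 1] (mod q)" unfolding chebT_def by (rule poly_cong_int)
    hence "[chebT n x = 1] (mod q)" unfolding chebT_one .
    hence "[chebT n x = x] (mod q)" using cong_sym[OF \<open>[x = 1] (mod q)\<close>] by (rule cong_trans)
    thus ?thesis unfolding q_def chebIter_eq by (intro exI[of _ 1]) simp
  next
    case 4
    hence xm: "[x = -1] (mod q)" by (simp add: cong_iff_dvd_diff)
    have "odd n"
    proof
      assume "even n"
      moreover have "even (p^2 - 1)" using p prime_odd_nat[of p] by simp
      ultimately show False using cop p by (metis coprime_common_divisor dvd_refl odd_one)
    qed
    have "[chebT n x = chebT n (-1)] (mod q)" unfolding chebT_def using xm by (rule poly_cong_int)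
    moreover have "chebT n (-1) = -1" using \<open>odd n\<close> by (simp add: chebT_minus_one)
    ultimately have "[chebT n x = -1] (mod q)" by simp
    hence "[chebT n x = x] (mod q)" using cong_sym[OF xm] by (rule cong_trans)
    thus ?thesis unfolding q_def chebIter_eq by (intro exI[of _ 1]) simp
  qed
qed



lemma ord_int_char:
  fixes p :: nat and a :: int
  assumes p1: "p > 1"
  shows "[a ^ j = 1] (mod int p) \<longleftrightarrow> ord (int p) a dvd j"
proof -
  define b where "b = nat (a mod int p)"
  have ib: "int b = a mod int p" unfolding b_def using p1 by simp
  have h1: "[a ^ d = 1] (mod int p) \<longleftrightarrow> [b ^ d = 1] (mod p)" for d
  proof -
    have "[a ^ d = 1] (mod int p) \<longleftrightarrow> (a mod int p) ^ d mod int p = 1 mod int p"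
      by (simp add: cong_def power_mod)
    also have "\<dots> \<longleftrightarrow> [int (b ^ d) = int 1] (mod int p)" unfolding cong_def ib[symmetric] by simp
    also have "\<dots> \<longleftrightarrow> [b ^ d = 1] (mod p)" by (rule cong_int_iff)
    finally show ?thesis .
  qed
  have h2: "coprime (int p) a \<longleftrightarrow> coprime p b"
  proof -
    have "coprime (int p) a \<longleftrightarrow> coprime (int p) (a mod int p)" using p1 by simp
    also have "\<dots> \<longleftrightarrow> coprime (int p) (int b)" unfolding ib ..
    also have "\<dots> \<longleftrightarrow> coprime p b" by simp
    finally show ?thesis .
  qed
  have h3: "ord (int p) a = ord p b"
    unfolding ord_def h2 h1 ..
  show ?thesis unfolding h1 h3 by (rule ord_divides)
qed

lemma chebIter_add_cong:
  assumes "[chebIter n a x = x] (mod q)" "[chebIter n b x = x] (mod q)"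
  shows "[chebIter n (a + b) x = x] (mod q)"
proof -
  have "chebIter n (a + b) x = chebT (n ^ a) (chebIter n b x)"
    by (simp add: chebIter_eq power_add chebT_mult)
  moreover have "[chebT (n ^ a) (chebIter n b x) = chebT (n ^ a) x] (mod q)"
    unfolding chebT_def using assms(2) by (rule poly_cong_int)
  ultimately show ?thesis using assms(1) unfolding chebIter_eq by (metis cong_trans)
qed

lemma chebIter_mult_cong:
  assumes "[chebIter n a x = x] (mod q)"
  shows "[chebIter n (a * j) x = x] (mod q)"
proof (induction j)
  case 0 then show ?case by (simp add: chebIter_def)
next
  case (Suc j)
  have "a * Suc j = a + a * j" by simp
  then show ?case using chebIter_add_cong[OF assms Suc] by simp
qed

lemma chebIter_sub_cong:
  assumes "[chebIter n a x = x] (mod q)" "[chebIter n b x = x] (mod q)" "b \<le> a"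
  shows "[chebIter n (a - b) x = x] (mod q)"
proof -
  have na: "n ^ a = n ^ (a - b) * n ^ b" using assms(3) by (metis le_add_diff_inverse2 power_add)
  have "chebIter n a x = chebT (n ^ (a - b)) (chebIter n b x)"
    unfolding chebIter_eq na chebT_mult ..
  moreover have "[chebT (n ^ (a - b)) (chebIter n b x) = chebT (n ^ (a - b)) x] (mod q)"
    unfolding chebT_def using assms(2) by (rule poly_cong_int)
  ultimately have "[chebIter n a x = chebIter n (a - b) x] (mod q)" unfolding chebIter_eq by simp
  thus ?thesis using assms(1) by (metis cong_sym cong_trans)
qed

lemma period_char:
  assumes ex: "\<exists>N>0. [chebIter n N x = x] (mod q)"
  shows "least_period n q x > 0 \<and> (\<forall>m. [chebIter n m x = x] (mod q) \<longleftrightarrow> least_period n q x dvd m)"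
proof -
  define L where "L = least_period n q x"
  have L: "0 < L \<and> [chebIter n L x = x] (mod q)"
    unfolding L_def least_period_def using ex by (rule LeastI_ex)
  have Lmin: "L \<le> m" if "0 < m" "[chebIter n m x = x] (mod q)" for m
    unfolding L_def least_period_def using that by (intro Least_le) simp
  have "[chebIter n m x = x] (mod q) \<longleftrightarrow> L dvd m" for m
  proof
    assume "L dvd m"
    then obtain j where "m = L * j" by blast
    thus "[chebIter n m x = x] (mod q)" using chebIter_mult_cong L by blast
  next
    assume m: "[chebIter n m x = x] (mod q)"
    have "[chebIter n (L * (m div L)) x = x] (mod q)" using chebIter_mult_cong L by blast
    hence "[chebIter n (m - L * (m div L)) x = x] (mod q)"
      using m by (intro chebIter_sub_cong) (assumption, assumption, metis div_mult_mod_eq le_add1 mult.commute)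
    moreover have "m - L * (m div L) = m mod L" by (metis minus_mult_div_eq_mod)
    ultimately have mm: "[chebIter n (m mod L) x = x] (mod q)" by simp
    show "L dvd m"
    proof (rule ccontr)
      assume "\<not> L dvd m"
      hence "0 < m mod L" by (simp add: mod_greater_zero_iff_not_dvd)
      hence "L \<le> m mod L" using Lmin mm by blast
      moreover have "m mod L < L" using L by simp
      ultimately show False by simp
    qed
  qed
  thus ?thesis using L unfolding L_def by blast
qed

lemma period_eq:
  assumes M: "M > 0" and ch: "\<forall>m. [chebIter n m x = x] (mod q) \<longleftrightarrow> M dvd m"
  shows "least_period n q x = M"
  unfolding least_period_def
proof (rule Least_equality)
  show "0 < M \<and> [chebIter n M x = x] (mod q)" using M ch by simp
next
  fix y assume "0 < y \<and> [chebIter n y x = x] (mod q)"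
  hence "M dvd y" "y > 0" using ch by auto
  thus "M \<le> y" by (simp add: dvd_imp_le)
qed

lemma not_dvd_mult_exact:
  fixes q d s :: int
  assumes q: "prime q" and nd: "\<not> q ^ Suc w dvd d" and ns: "\<not> q dvd s"
  shows "\<not> q ^ Suc w dvd d * s"
proof -
  have "coprime q s" using q ns by (simp add: prime_imp_coprime)
  hence "coprime (q ^ Suc w) s" by simp
  thus ?thesis using nd by (simp add: coprime_dvd_mult_left_iff)
qed

lemma exact_val:
  fixes q d :: int
  assumes "d \<noteq> 0" "q > 1"
  shows "q ^ multiplicity q d dvd d \<and> \<not> q ^ Suc (multiplicity q d) dvd d"
proof -
  have nu: "\<not> is_unit q" using assms by simp
  show ?thesis using multiplicity_dvd[of q d] power_dvd_iff_le_multiplicity[OF assms(1) nu, of "Suc (multiplicity q d)"]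
    by auto
qed



lemma poly_cheb_fun: "poly (cheb a) = chebT a"
  by (rule ext) (simp add: chebT_def)

lemma it_bridge: "(poly (cheb (n ^ M)) ^^ j) x = chebIter n (M * j) x"
  unfolding poly_cheb_fun chebT_funpow chebIter_eq by (simp add: power_mult)

lemma poly_cheb_pow: "poly (cheb (n ^ M)) x = chebIter n M x"
  by (simp add: chebT_def chebIter_eq)

lemma pderiv_cheb_pow: "poly (pderiv (cheb (n ^ M))) x = chebT' (n ^ M) x"
  by (simp add: chebT'_def)

theorem theorem1:
  fixes p n k v :: nat and x :: int
  assumes "prime p" and "p > 3" and "n > 1"
    and "coprime n p" and "coprime n (p^2 - 1)"
    and "k > 0" and "2 \<le> x" and "x \<le> int p ^ k - 1"
    and "[chebIter n (least_period n (int p) x * ord (int p) (chebT' (n ^ least_period n (int p) x) x)) x = x]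
           (mod (int p ^ v))"
    and "\<forall>t. [chebIter n (least_period n (int p) x * ord (int p) (chebT' (n ^ least_period n (int p) x) x)) x = x]
           (mod (int p ^ t)) \<longrightarrow> t \<le> v"
    and "k \<ge> v"
  shows "least_period n (int p ^ k) x
           = least_period n (int p) x * ord (int p) (chebT' (n ^ least_period n (int p) x) x) * p ^ (k - v)"
proof -
  define q where "q = int p"
  define N where "N = least_period n q x"
  define lam where "lam = chebT' (n ^ N) x"
  define l where "l = ord q lam"
  have h9: "[chebIter n (N * l) x = x] (mod q ^ v)"
    using assms(9) unfolding N_def l_def lam_def q_def .
  have h10: "\<And>t. [chebIter n (N * l) x = x] (mod q ^ t) \<Longrightarrow> t \<le> v"
    using assms(10) unfolding N_def l_def lam_def q_def by blast
  have p1: "p > 1" using assms(2) by simp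
  have pq: "prime q" unfolding q_def using assms(1) by simp
  have q1: "q > 1" unfolding q_def using p1 by simp
  have ex: "\<exists>N>0. [chebIter n N x = x] (mod q)"
    unfolding q_def using period_mod_p_exists[OF assms(1) assms(2) assms(5)] .
  have N0: "N > 0" and chN: "\<And>m. [chebIter n m x = x] (mod q) \<longleftrightarrow> N dvd m"
    using period_char[OF ex] unfolding N_def by blast+
  have G0: "chebIter n 0 x = x" by (simp add: chebIter_def)
  have l0: "l > 0"
  proof (rule ccontr)
    assume "\<not> l > 0"
    hence "N * l = 0" by simp
    hence "chebIter n (N * l) x = x" using G0 by metis
    hence "[chebIter n (N * l) x = x] (mod q ^ Suc v)" by (metis cong_refl)
    thus False using h10 by fastforce
  qed
  have ordc: "\<And>j. [lam ^ j = 1] (mod q) \<longleftrightarrow> l dvd j"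
    unfolding l_def q_def using ord_int_char[OF p1] .
  have dl: "[chebT' (n ^ (N * j)) x = lam ^ j] (mod q)" for j
  proof (induction j)
    case 0 then show ?case by (simp add: chebT'_def pderiv_pCons)
  next
    case (Suc j)
    have "n ^ (N * Suc j) = n ^ N * n ^ (N * j)" by (simp add: power_add)
    hence e: "chebT' (n ^ (N * Suc j)) x = chebT' (n ^ N) (chebIter n (N * j) x) * chebT' (n ^ (N * j)) x"
      by (simp add: chebT'_mult chebIter_eq)
    have "[chebIter n (N * j) x = x] (mod q)" using chN by simp
    hence "[chebT' (n ^ N) (chebIter n (N * j) x) = chebT' (n ^ N) x] (mod q)"
      unfolding chebT'_def by (rule poly_cong_int)
    hence "[chebT' (n ^ N) (chebIter n (N * j) x) * chebT' (n ^ (N * j)) x = lam * lam ^ j] (mod q)"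
      using Suc unfolding lam_def by (rule cong_mult)
    thus ?case unfolding e by simp
  qed
  have dl1: "[chebT' (n ^ (N * (l * j))) x = 1] (mod q)" for j
  proof -
    have "[lam ^ (l * j) = 1] (mod q)" using ordc by simp
    thus ?thesis using dl[of "l * j"] by (metis cong_trans)
  qed
  have v1: "v \<ge> 1"
  proof -
    have "[chebIter n (N * l) x = x] (mod q ^ 1)" using chN by simp
    thus ?thesis using h10 by blast
  qed
  have nv: "\<not> [chebIter n (N * l) x = x] (mod q ^ Suc v)" using h10 by fastforce
  have lift: "q ^ (v + e) dvd chebIter n (N * l * p ^ e) x - x \<and> \<not> q ^ Suc (v + e) dvd chebIter n (N * l * p ^ e) x - x" for e
  proof (induction e)
    case 0
    show ?case using h9 nv by (simp add: cong_iff_dvd_diff)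
  next
    case (Suc e)
    define P where "P = cheb (n ^ (N * l * p ^ e))"
    have a1: "int p ^ (v + e) dvd (poly P x - x)" "\<not> int p ^ Suc (v + e) dvd (poly P x - x)"
      using Suc unfolding P_def poly_cheb_pow q_def by auto
    have a2: "[poly (pderiv P) x = 1] (mod int p)"
      unfolding P_def pderiv_cheb_pow q_def[symmetric] using dl1[of "p ^ e"] by (simp add: mult.assoc)
    have "int p ^ Suc (v + e) dvd ((poly P ^^ p) x - x) \<and> \<not> int p ^ Suc (Suc (v + e)) dvd ((poly P ^^ p) x - x)"
      using iter_p[OF assms(1) assms(2) _ a1 a2] v1 by simp
    moreover have "(poly P ^^ p) x = chebIter n (N * l * p ^ Suc e) x"
      unfolding P_def it_bridge by (simp add: algebra_simps)
    ultimately show ?case unfolding q_def by simp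
  qed
  have exr: "\<not> q ^ Suc (v + e) dvd chebIter n (N * l * p ^ e * r) x - x" if r: "\<not> p dvd r" for e r
  proof -
    define P where "P = cheb (n ^ (N * l * p ^ e))"
    define de where "de = poly P x - x"
    define le where "le = poly (pderiv P) x"
    have de1: "q ^ (v + e) dvd de" "\<not> q ^ Suc (v + e) dvd de"
      using lift[of e] unfolding de_def P_def poly_cheb_pow by auto
    have le1: "[le = 1] (mod q)"
      unfolding le_def P_def pderiv_cheb_pow using dl1[of "p ^ e"] by (simp add: mult.assoc)
    have it: "q ^ Suc (v + e) dvd (((poly P ^^ r) x - x) - de * (\<Sum>i<r. le ^ i))"
      unfolding de_def le_def using iter_first[of "v + e" q P x r] de1(1) v1 unfolding de_def by simp
    have "[(\<Sum>i<r. le ^ i) = (\<Sum>i<r. 1)] (mod q)"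
      by (rule cong_sum) (use le1 cong_pow in fastforce)
    hence qS: "q dvd (\<Sum>i<r. le ^ i) - int r" by (simp add: cong_iff_dvd_diff)
    have "q ^ (v + e) * q dvd de * ((\<Sum>i<r. le ^ i) - int r)" using de1(1) qS by (rule mult_dvd_mono)
    hence t2: "q ^ Suc (v + e) dvd de * (\<Sum>i<r. le ^ i) - de * int r" by (simp add: algebra_simps)
    have t3: "\<not> q ^ Suc (v + e) dvd de * int r"
      using not_dvd_mult_exact[OF pq de1(2)] r unfolding q_def by simp
    have "\<not> q ^ Suc (v + e) dvd ((poly P ^^ r) x - x)"
    proof
      assume h: "q ^ Suc (v + e) dvd ((poly P ^^ r) x - x)"
      have "q ^ Suc (v + e) dvd ((poly P ^^ r) x - x) - (((poly P ^^ r) x - x) - de * (\<Sum>i<r. le ^ i)) - (de * (\<Sum>i<r. le ^ i) - de * int r)"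
        by (rule dvd_diff[OF dvd_diff[OF h it] t2])
      thus False using t3 by simp
    qed
    moreover have "(poly P ^^ r) x = chebIter n (N * l * p ^ e * r) x"
      unfolding P_def it_bridge ..
    ultimately show ?thesis by simp
  qed
  have char: "[chebIter n m x = x] (mod q ^ k) \<longleftrightarrow> N * l * p ^ (k - v) dvd m" for m
  proof
    assume "N * l * p ^ (k - v) dvd m"
    then obtain j where m: "m = N * l * p ^ (k - v) * j" by blast
    have "q ^ k dvd chebIter n (N * l * p ^ (k - v)) x - x" using lift[of "k - v"] assms(11) by simp
    hence "[chebIter n (N * l * p ^ (k - v)) x = x] (mod q ^ k)" by (simp add: cong_iff_dvd_diff)
    thus "[chebIter n m x = x] (mod q ^ k)" unfolding m by (rule chebIter_mult_cong)
  next
    assume hm: "[chebIter n m x = x] (mod q ^ k)"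
    have "[chebIter n m x = x] (mod q)"
      using hm by (rule cong_dvd_modulus) (use assms(6) in \<open>simp add: dvd_power\<close>)
    then obtain m' where m': "m = N * m'" using chN by blast
    have lm: "l dvd m'"
    proof (rule ccontr)
      assume nl: "\<not> l dvd m'"
      hence "l \<noteq> 1" by auto
      hence nlam: "\<not> q dvd lam - 1" using ordc[of 1] by (simp add: cong_iff_dvd_diff)
      define d where "d = chebIter n N x - x"
      have dnz: "d \<noteq> 0"
      proof
        assume "d = 0"
        hence "[chebIter n N x = x] (mod q ^ Suc v)" unfolding d_def by simp
        hence "[chebIter n (N * l) x = x] (mod q ^ Suc v)" by (rule chebIter_mult_cong)
        thus False using nv by simp
      qed
      define w where "w = multiplicity q d"
      have dw: "q ^ w dvd d" "\<not> q ^ Suc w dvd d" using exact_val[OF dnz q1] unfolding w_def by auto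
      have "q dvd d" using chN[of N] unfolding d_def by (simp add: cong_iff_dvd_diff)
      hence w1: "w \<ge> 1"
        using dw(2) by (cases w) auto
      define P where "P = cheb (n ^ N)"
      have Pd: "poly P x - x = d" unfolding P_def d_def poly_cheb_pow ..
      have Pl: "poly (pderiv P) x = lam" unfolding P_def pderiv_cheb_pow lam_def ..
      have itj: "q ^ Suc w dvd (chebIter n (N * j) x - x) - d * (\<Sum>i<j. lam ^ i)" for j
      proof -
        have "q ^ Suc w dvd ((poly P ^^ j) x - x) - d * (\<Sum>i<j. lam ^ i)"
          using iter_first[of w q P x j] w1 dw(1) unfolding Pd Pl by simp
        thus ?thesis unfolding P_def it_bridge .
      qed
      have geo: "lam ^ j - 1 = (lam - 1) * (\<Sum>i<j. lam ^ i)" for j by (rule power_diff_1_eq)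
      have "q dvd lam ^ l - 1" using ordc[of l] by (simp add: cong_iff_dvd_diff)
      hence "q dvd (\<Sum>i<l. lam ^ i)" using pq nlam unfolding geo by (simp add: prime_dvd_mult_iff)
      hence "q ^ w * q dvd d * (\<Sum>i<l. lam ^ i)" using dw(1) by (intro mult_dvd_mono)
      hence "q ^ Suc w dvd d * (\<Sum>i<l. lam ^ i)" by (simp add: mult.commute)
      hence "q ^ Suc w dvd chebIter n (N * l) x - x" using itj[of l]
        by (metis diff_add_cancel dvd_add)
      hence "Suc w \<le> v" using h10 by (simp add: cong_iff_dvd_diff)
      have "\<not> q dvd lam ^ m' - 1" using ordc[of m'] nl by (simp add: cong_iff_dvd_diff)
      hence "\<not> q dvd (\<Sum>i<m'. lam ^ i)" unfolding geo by auto
      hence nd: "\<not> q ^ Suc w dvd d * (\<Sum>i<m'. lam ^ i)" using not_dvd_mult_exact[OF pq dw(2)] by blast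
      have "q ^ k dvd chebIter n (N * m') x - x" using hm m' by (simp add: cong_iff_dvd_diff)
      moreover have "q ^ Suc w dvd q ^ k" using \<open>Suc w \<le> v\<close> assms(11) by (intro dvd_pow_mono_int) simp
      ultimately have "q ^ Suc w dvd chebIter n (N * m') x - x" by (rule dvd_trans[rotated])
      hence "q ^ Suc w dvd (chebIter n (N * m') x - x) - ((chebIter n (N * m') x - x) - d * (\<Sum>i<m'. lam ^ i))"
        using itj[of m'] by (rule dvd_diff)
      thus False using nd by simp
    qed
    then obtain m'' where m'': "m' = l * m''" by blast
    show "N * l * p ^ (k - v) dvd m"
    proof (cases "m'' = 0")
      case True then show ?thesis using m' m'' by simp
    next
      case False
      have nu: "\<not> is_unit p" using p1 by simp
      obtain r where r: "m'' = p ^ multiplicity p m'' * r" "\<not> p dvd r"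
        using multiplicity_decompose'[OF False nu] by blast
      define e where "e = multiplicity p m''"
      have mm: "m = N * l * p ^ e * r" unfolding m' m'' e_def using r(1) by (simp add: mult.assoc)
      have "k \<le> v + e"
      proof (rule ccontr)
        assume "\<not> k \<le> v + e"
        hence "q ^ Suc (v + e) dvd q ^ k" by (intro dvd_pow_mono_int) simp
        moreover have "q ^ k dvd chebIter n m x - x" using hm by (simp add: cong_iff_dvd_diff)
        ultimately have "q ^ Suc (v + e) dvd chebIter n (N * l * p ^ e * r) x - x"
          unfolding mm by (rule dvd_trans)
        thus False using exr[OF r(2)] by simp
      qed
      hence "p ^ (k - v) dvd p ^ e" by (intro le_imp_power_dvd) simp
      hence "N * l * p ^ (k - v) dvd N * l * p ^ e * r" by (simp add: mult_dvd_mono)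
      thus ?thesis unfolding mm .
    qed
  qed
  have "least_period n (q ^ k) x = N * l * p ^ (k - v)"
    by (rule period_eq) (use N0 l0 p1 char in auto)
  thus ?thesis unfolding N_def l_def lam_def q_def .
qed


end
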